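(* Let $f:I\to\mathbb{Q}_4$ be a $3$-generic conformal geodesic with Frenet frame $e:I\to\mathrm{M\ddot{o}b}(4)$, conformal arclength $s$ and curvatures $\mu_1,\mu_2,\mu_3$ (so $\mu_1+\frac32\mu_2^2=C_1$, $\mu_2^2\mu_3=C_2$, $\dot\mu_2^2+\mu_2^4-2C_1\mu_2^2+C_2^2\mu_2^{-2}=C_3$ for constants $C_1,C_2,C_3$). Let $\Phi(s)=e^{-1}\dot e$ be the $6\times6$ matrix (rows/columns indexed $0,\dots,5$) $$\Phi=\begin{pmatrix}0&\mu_1&1&0&0&0\\1&0&0&0&0&\mu_1\\0&0&0&-\mu_2&0&1\\0&0&\mu_2&0&-\mu_3&0\\0&0&0&\mu_3&0&0\\0&1&0&0&0&0\end{pmatrix},\qquad \Theta=\begin{pmatrix}0&1&-\mu_1-\mu_2^2&\dot\mu_2&\mu_2\mu_3&0\\0&0&0&-\mu_2&0&1\\1&0&0&0&0&-\mu_1-\mu_2^2\\0&\mu_2&0&0&0&\dot\mu_2\\0&0&0&0&0&\mu_2\mu_3\\0&0&1&0&0&0\end{pmatrix}.$$ Then $\dot\Theta=\Theta\Phi-\Phi\Theta$ on $I$; consequently $\omega=e\Theta e^{-1}$ is a constant element of the Lie algebra of $\mathrm{M\ddot{o}b}(4)$, and the characteristic polynomial of $\Theta$ (and of $\omega$) is $$\chi(t)=t^6+2C_1t^4-(1+C_3)t^2-C_2^2 .$$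
   Context: $\mathbb{Q}_4$ is the projectivized null cone of $\langle v,w\rangle=\sum_{A=1}^4v^Aw^A-v^0w^5-v^5w^0$ on $\mathbb{R}^6$; $\mathrm{M\ddot{o}b}(4)$ is the identity component of its isometry group. A Frenet frame along a $3$-generic curve $f$ is a smooth $e=(e_0|\dots|e_5):I\to\mathrm{M\ddot{o}b}(4)$ with $[e_0]=f$ whose Maurer–Cartan form $e^{-1}de$ equals $\Phi\,ds$ with $\Phi$ as displayed, $\mu_2>0$, $\mu_3\neq0$; $s$ is the conformal arclength and dots are $d/ds$. Being a conformal geodesic (critical point of the conformal arclength functional under compactly supported variations) is equivalent, for such curves, to $\dot\mu_1+3\mu_2\dot\mu_2=0$, $\ddot\mu_2=\mu_2^3+2\mu_1\mu_2+\mu_2\mu_3^2$, $2\dot\mu_2\mu_3+\mu_2\dot\mu_3=0$, whose first integrals are the stated relations with constants $C_1,C_2,C_3$. *)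

theory Defs
  imports "HOL-Analysis.Analysis"
begin

datatype idx6 = X0 | X1 | X2 | X3 | X4 | X5

lemma UNIV_idx6: "(UNIV :: idx6 set) = {X0, X1, X2, X3, X4, X5}"
  by (auto intro: idx6.exhaust)

instance idx6 :: finite
  by standard (simp add: UNIV_idx6)

fun ix :: "idx6 \<Rightarrow> nat" where
  "ix X0 = 0" | "ix X1 = 1" | "ix X2 = 2" | "ix X3 = 3" | "ix X4 = 4" | "ix X5 = 5"

definition mat6 :: "real list list \<Rightarrow> real ^ idx6 ^ idx6" where
  "mat6 rs = (\<chi> i j. rs ! ix i ! ix j)"

text \<open>Gram matrix of <v,w> = sum_{A=1..4} v^A w^A - v^0 w^5 - v^5 w^0.\<close>
definition gramJ :: "real ^ idx6 ^ idx6" where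
  "gramJ = mat6 [[0,0,0,0,0,-1],
                 [0,1,0,0,0,0],
                 [0,0,1,0,0,0],
                 [0,0,0,1,0,0],
                 [0,0,0,0,1,0],
                 [-1,0,0,0,0,0]]"

definition isom_group :: "(real ^ idx6 ^ idx6) set" where
  "isom_group = {g. transpose g ** gramJ ** g = gramJ}"

definition Mob4 :: "(real ^ idx6 ^ idx6) set" where
  "Mob4 = connected_component_set isom_group (mat 1)"

definition mob4_lie_algebra :: "(real ^ idx6 ^ idx6) set" where
  "mob4_lie_algebra = {X. transpose X ** gramJ + gramJ ** X = 0}"

definition PhiM :: "real \<Rightarrow> real \<Rightarrow> real \<Rightarrow> real ^ idx6 ^ idx6" where
  "PhiM m1 m2 m3 = mat6
     [[0, m1, 1, 0, 0, 0],
      [1, 0, 0, 0, 0, m1],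
      [0, 0, 0, -m2, 0, 1],
      [0, 0, m2, 0, -m3, 0],
      [0, 0, 0, m3, 0, 0],
      [0, 1, 0, 0, 0, 0]]"

text \<open>Theta, with d2 standing for the derivative of mu_2.\<close>
definition ThetaM :: "real \<Rightarrow> real \<Rightarrow> real \<Rightarrow> real \<Rightarrow> real ^ idx6 ^ idx6" where
  "ThetaM m1 m2 m3 d2 = mat6
     [[0, 1, -m1 - m2^2, d2, m2*m3, 0],
      [0, 0, 0, -m2, 0, 1],
      [1, 0, 0, 0, 0, -m1 - m2^2],
      [0, m2, 0, 0, 0, d2],
      [0, 0, 0, 0, 0, m2*m3],
      [0, 0, 1, 0, 0, 0]]"

end

theory Submission imports Defs begin
lemma all6: "(\<forall>i::idx6. P i) \<longleftrightarrow> P X0 \<and> P X1 \<and> P X2 \<and> P X3 \<and> P X4 \<and> P X5"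
  by (metis idx6.exhaust)

lemma mat_add_rdistrib: "((A::real^'n^'m) + B) ** C = A ** C + B ** C"
  by (simp add: matrix_matrix_mult_def vec_eq_iff sum.distrib algebra_simps)
lemma mat_diff_ldistrib: "(A::real^'n^'m) ** (B - C) = A ** B - A ** C"
  by (simp add: matrix_matrix_mult_def vec_eq_iff sum_subtractf algebra_simps)

lemma mat_diff_rdistrib: "((A::real^'n^'m) - B) ** C = A ** C - B ** C"
  by (simp add: matrix_matrix_mult_def vec_eq_iff sum_subtractf algebra_simps)

lemma bb: "bounded_bilinear ((**) :: real^idx6^idx6 \<Rightarrow> real^idx6^idx6 \<Rightarrow> real^idx6^idx6)"
  unfolding bilinear_conv_bounded_bilinear[symmetric] bilinear_def
  by (auto intro!: linearI simp: matrix_add_ldistrib mat_add_rdistrib matrix_scalar_ac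
      scalar_matrix_assoc[symmetric])

lemma blT: "bounded_linear (transpose :: real^idx6^idx6 \<Rightarrow> real^idx6^idx6)"
  unfolding linear_conv_bounded_linear[symmetric]
  by (auto intro!: linearI simp: transpose_def vec_eq_iff)

lemma JJ: "gramJ ** gramJ = mat 1"
  by (simp add: vec_eq_iff all6 gramJ_def mat6_def matrix_matrix_mult_def UNIV_idx6 mat_def)
lemma JT: "transpose gramJ = gramJ"
  by (simp add: vec_eq_iff all6 gramJ_def mat6_def transpose_def)
lemma kPhi: "gramJ ** transpose (PhiM a b c) + PhiM a b c ** gramJ = 0"
  by (simp add: vec_eq_iff all6 gramJ_def PhiM_def mat6_def matrix_matrix_mult_def UNIV_idx6 transpose_def)
lemma kTheta: "gramJ ** transpose (ThetaM a b c d) + ThetaM a b c d ** gramJ = 0"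
  by (simp add: vec_eq_iff all6 gramJ_def ThetaM_def mat6_def matrix_matrix_mult_def UNIV_idx6 transpose_def)

definition "A0 = mat6 [[0,1,0,0,0,0],[0,0,0,0,0,1],[1,0,0,0,0,0],[0,0,0,0,0,0],[0,0,0,0,0,0],[0,0,1,0,0,0]]"
definition "B1 = mat6 [[0,0,1,0,0,0],[0,0,0,0,0,0],[0,0,0,0,0,1],[0,0,0,0,0,0],[0,0,0,0,0,0],[0,0,0,0,0,0]]"
definition "B2 = mat6 [[0,0,0,1,0,0],[0,0,0,0,0,0],[0,0,0,0,0,0],[0,0,0,0,0,1],[0,0,0,0,0,0],[0,0,0,0,0,0]]"
definition "B3 = mat6 [[0,0,0,0,1,0],[0,0,0,0,0,0],[0,0,0,0,0,0],[0,0,0,0,0,0],[0,0,0,0,0,1],[0,0,0,0,0,0]]"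
definition "B4 = mat6 [[0,0,0,0,0,0],[0,0,0,-1,0,0],[0,0,0,0,0,0],[0,1,0,0,0,0],[0,0,0,0,0,0],[0,0,0,0,0,0]]"

lemma Theta_decomp: "ThetaM m1 m2 m3 d2 = A0 + (- m1 - m2^2) *\<^sub>R B1 + d2 *\<^sub>R B2 + (m2*m3) *\<^sub>R B3 + m2 *\<^sub>R B4"
  by (simp add: vec_eq_iff all6 ThetaM_def mat6_def A0_def B1_def B2_def B3_def B4_def)

lemma comm_eq:
  assumes "dm1 = -3*m2*d2" "dd2 = m2^3 + 2*m1*m2 + m2*m3^2" "m2*dm3 = -2*d2*m3"
  shows "(-dm1 - 2*m2*d2) *\<^sub>R B1 + dd2 *\<^sub>R B2 + (d2*m3 + m2*dm3) *\<^sub>R B3 + d2 *\<^sub>R B4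
     = ThetaM m1 m2 m3 d2 ** PhiM m1 m2 m3 - PhiM m1 m2 m3 ** ThetaM m1 m2 m3 d2"
  using assms
  apply (simp add: vec_eq_iff all6 ThetaM_def PhiM_def mat6_def B1_def B2_def B3_def B4_def
      matrix_matrix_mult_def UNIV_idx6)
  apply (simp add: algebra_simps power2_eq_square power3_eq_cube)
  done


lemma Mdef: "t *\<^sub>R mat 1 - ThetaM m1 m2 m3 d2 = mat6
     [[t, -1, m1 + m2^2, -d2, -m2*m3, 0],
      [0, t, 0, m2, 0, -1],
      [-1, 0, t, 0, 0, m1 + m2^2],
      [0, -m2, 0, t, 0, -d2],
      [0, 0, 0, 0, t, -m2*m3],
      [0, 0, -1, 0, 0, t]]"
  by (simp add: vec_eq_iff all6 ThetaM_def mat6_def mat_def)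

lemma power6': "(x::real)^6 = x*(x*(x*(x*(x*x))))"
  by (simp add: numeral_eq_Suc)

lemma detTheta0: "det (mat6
     [[t, -1, m1 + m2^2, -d2, -m2*m3, 0],
      [0, t, 0, m2, 0, -1],
      [-1, 0, t, 0, 0, m1 + m2^2],
      [0, -m2, 0, t, 0, -d2],
      [0, 0, 0, 0, t, -m2*m3],
      [0, 0, -1, 0, 0, t]]) =
  t^6 + (2*m1+3*m2^2)*t^4 + (2*m2^4 + 2*m1*m2^2 - 1 - d2^2 - m2^2*m3^2)*t^2 - m2^4*m3^2"
proof -
  have f1: "finite {X1,X2,X3,X4,X5}" "X0 \<notin> {X1,X2,X3,X4,X5}" by auto
  have f2: "finite {X2,X3,X4,X5}" "X1 \<notin> {X2,X3,X4,X5}" by auto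
  have f3: "finite {X3,X4,X5}" "X2 \<notin> {X3,X4,X5}" by auto
  have f4: "finite {X4,X5}" "X3 \<notin> {X4,X5}" by auto
  have f5: "finite {X5}" "X4 \<notin> {X5}" by auto
  show ?thesis
    unfolding det_def UNIV_idx6
    unfolding sum_over_permutations_insert[OF f1] sum_over_permutations_insert[OF f2]
      sum_over_permutations_insert[OF f3] sum_over_permutations_insert[OF f4]
      sum_over_permutations_insert[OF f5]
    unfolding permutes_sing
    apply (simp add: sign_swap_id permutation_swap_id sign_compose permutation_compose swap_id_eq
        mat6_def)
    apply (simp add: algebra_simps power2_eq_square power4_eq_xxxx power6')
    done
qed

lemma detTheta: "det (t *\<^sub>R mat 1 - ThetaM m1 m2 m3 d2) =
  t^6 + (2*m1+3*m2^2)*t^4 + (2*m2^4 + 2*m1*m2^2 - 1 - d2^2 - m2^2*m3^2)*t^2 - m2^4*m3^2"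
  unfolding Mdef detTheta0 ..

lemma inv_unique: "(A::real^'n^'n) ** B = mat 1 \<Longrightarrow> B ** A = mat 1 \<Longrightarrow> matrix_inv A = B"
proof -
  assume ab: "A ** B = mat 1" and ba: "B ** A = mat 1"
  have "\<exists>C. A ** C = mat 1 \<and> C ** A = mat 1" using ab ba by blast
  hence c: "A ** matrix_inv A = mat 1 \<and> matrix_inv A ** A = mat 1"
    unfolding matrix_inv_def by (rule someI_ex)
  have "matrix_inv A = (B ** A) ** matrix_inv A" using ba by simp
  also have "\<dots> = B" using c by (simp flip: matrix_mul_assoc)
  finally show ?thesis .
qed

theorem mainTheorem10:
  fixes I :: "real set"
    and e :: "real \<Rightarrow> real ^ idx6 ^ idx6"
    and mu1 mu2 mu3 :: "real \<Rightarrow> real"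
    and C1 C2 C3 :: real
  assumes I_interval: "is_interval I" and I_open: "open I" and I_ne: "I \<noteq> {}"
    and diff: "\<forall>s\<in>I. mu1 differentiable (at s) \<and> mu2 differentiable (at s)
                    \<and> deriv mu2 differentiable (at s) \<and> mu3 differentiable (at s)"
    and generic: "\<forall>s\<in>I. mu2 s > 0 \<and> mu3 s \<noteq> 0"
    and frame: "\<forall>s\<in>I. e s \<in> Mob4"
    and frenet: "\<forall>s\<in>I. (e has_vector_derivative (e s ** PhiM (mu1 s) (mu2 s) (mu3 s))) (at s)"
    and geod1: "\<forall>s\<in>I. deriv mu1 s + 3 * mu2 s * deriv mu2 s = 0"
    and geod2: "\<forall>s\<in>I. deriv (deriv mu2) s
                   = mu2 s ^ 3 + 2 * mu1 s * mu2 s + mu2 s * mu3 s ^ 2"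
    and geod3: "\<forall>s\<in>I. 2 * deriv mu2 s * mu3 s + mu2 s * deriv mu3 s = 0"
    and int1: "\<forall>s\<in>I. mu1 s + 3/2 * mu2 s ^ 2 = C1"
    and int2: "\<forall>s\<in>I. mu2 s ^ 2 * mu3 s = C2"
    and int3: "\<forall>s\<in>I. deriv mu2 s ^ 2 + mu2 s ^ 4 - 2 * C1 * mu2 s ^ 2
                   + C2 ^ 2 / mu2 s ^ 2 = C3"
  defines "Theta \<equiv> (\<lambda>s. ThetaM (mu1 s) (mu2 s) (mu3 s) (deriv mu2 s))"
      and "Phi \<equiv> (\<lambda>s. PhiM (mu1 s) (mu2 s) (mu3 s))"
      and "chi \<equiv> (\<lambda>t::real. t ^ 6 + 2 * C1 * t ^ 4 - (1 + C3) * t ^ 2 - C2 ^ 2)"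
  shows "(\<forall>s\<in>I. (Theta has_vector_derivative (Theta s ** Phi s - Phi s ** Theta s)) (at s))
       \<and> (\<exists>\<omega>\<in>mob4_lie_algebra. (\<forall>s\<in>I. e s ** Theta s ** matrix_inv (e s) = \<omega>)
              \<and> (\<forall>t. det (t *\<^sub>R mat 1 - \<omega>) = chi t))
       \<and> (\<forall>s\<in>I. \<forall>t. det (t *\<^sub>R mat 1 - Theta s) = chi t)"
proof -
  have P1: "(Theta has_vector_derivative (Theta s ** Phi s - Phi s ** Theta s)) (at s)"
    if s: "s \<in> I" for s
  proof -
    have dm1: "(mu1 has_real_derivative deriv mu1 s) (at s)"
      using diff s by (simp add: DERIV_deriv_iff_real_differentiable)
    have dm2: "(mu2 has_real_derivative deriv mu2 s) (at s)"
      using diff s by (simp add: DERIV_deriv_iff_real_differentiable)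
    have dd2: "(deriv mu2 has_real_derivative deriv (deriv mu2) s) (at s)"
      using diff s by (simp add: DERIV_deriv_iff_real_differentiable)
    have dm3: "(mu3 has_real_derivative deriv mu3 s) (at s)"
      using diff s by (simp add: DERIV_deriv_iff_real_differentiable)
    have f: "((\<lambda>x. - mu1 x - mu2 x ^ 2) has_real_derivative (- deriv mu1 s - 2 * mu2 s * deriv mu2 s)) (at s)"
      by (rule derivative_eq_intros dm1 dm2 | simp)+
    have g: "((\<lambda>x. mu2 x * mu3 x) has_real_derivative (deriv mu2 s * mu3 s + mu2 s * deriv mu3 s)) (at s)"
      by (rule derivative_eq_intros dm3 dm2 | simp)+
    have T: "Theta = (\<lambda>x. A0 + (- mu1 x - mu2 x^2) *\<^sub>R B1 + deriv mu2 x *\<^sub>R B2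
                 + (mu2 x * mu3 x) *\<^sub>R B3 + mu2 x *\<^sub>R B4)"
      unfolding Theta_def Theta_decomp ..
    have D: "(Theta has_vector_derivative ((- deriv mu1 s - 2 * mu2 s * deriv mu2 s) *\<^sub>R B1
        + deriv (deriv mu2) s *\<^sub>R B2 + (deriv mu2 s * mu3 s + mu2 s * deriv mu3 s) *\<^sub>R B3
        + deriv mu2 s *\<^sub>R B4)) (at s)"
      unfolding T
    proof (rule has_vector_derivative_eq_rhs)
      show "((\<lambda>x. A0 + (- mu1 x - mu2 x^2) *\<^sub>R B1 + deriv mu2 x *\<^sub>R B2
                 + (mu2 x * mu3 x) *\<^sub>R B3 + mu2 x *\<^sub>R B4) has_vector_derivative
          (0 + (((- mu1 s - mu2 s^2) *\<^sub>R 0 + (- deriv mu1 s - 2 * mu2 s * deriv mu2 s) *\<^sub>R B1)) 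
          + (deriv mu2 s *\<^sub>R 0 + deriv (deriv mu2) s *\<^sub>R B2)
          + ((mu2 s * mu3 s) *\<^sub>R 0 + (deriv mu2 s * mu3 s + mu2 s * deriv mu3 s) *\<^sub>R B3)
          + (mu2 s *\<^sub>R 0 + deriv mu2 s *\<^sub>R B4))) (at s)"
        by (intro has_vector_derivative_add has_vector_derivative_const has_vector_derivative_scaleR
            f g dm2 dd2)
    qed simp
    have "(- deriv mu1 s - 2 * mu2 s * deriv mu2 s) *\<^sub>R B1
        + deriv (deriv mu2) s *\<^sub>R B2 + (deriv mu2 s * mu3 s + mu2 s * deriv mu3 s) *\<^sub>R B3
        + deriv mu2 s *\<^sub>R B4 = Theta s ** Phi s - Phi s ** Theta s"
      unfolding Theta_def Phi_def
      apply (rule comm_eq)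
      using geod1 geod2 geod3 s by (auto simp: algebra_simps)
    with D show ?thesis by simp
  qed
  have P3: "det (t *\<^sub>R mat 1 - Theta s) = chi t" if s: "s \<in> I" for s t
  proof -
    have m2: "mu2 s > 0" using generic s by auto
    have c1: "C1 = mu1 s + 3/2 * mu2 s ^ 2" using int1 s by auto
    have c2: "C2 = mu2 s ^ 2 * mu3 s" using int2 s by auto
    have c3: "C3 = deriv mu2 s ^ 2 + mu2 s ^ 4 - 2 * C1 * mu2 s ^ 2 + mu2 s ^ 2 * mu3 s ^2"
      using int3 s m2 unfolding c2 by (auto simp: field_simps power2_eq_square)
    show ?thesis unfolding Theta_def detTheta chi_def c3 unfolding c1 c2
      by (simp add: algebra_simps power2_eq_square power4_eq_xxxx power6' power3_eq_cube)
  qed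
  obtain s0 where s0: "s0 \<in> I" using I_ne by auto
  define J where "J = gramJ"
  define W where "W = (\<lambda>x. e x ** Theta x ** (J ** transpose (e x) ** J))"
  have iso: "transpose (e s) ** J ** e s = J" if s: "s \<in> I" for s
  proof -
    have "e s \<in> isom_group" using frame s connected_component_subset unfolding Mob4_def by blast
    thus ?thesis unfolding isom_group_def J_def by simp
  qed
  have linv: "(J ** transpose (e s) ** J) ** e s = mat 1" if s: "s \<in> I" for s
    using iso[OF s] by (simp add: matrix_mul_assoc[symmetric] J_def JJ)
  have rinv: "e s ** (J ** transpose (e s) ** J) = mat 1" if s: "s \<in> I" for s
    using linv[OF s] matrix_left_right_inverse by blast
  have inv: "matrix_inv (e s) = J ** transpose (e s) ** J" if s: "s \<in> I" for s
    using inv_unique[OF rinv[OF s] linv[OF s]] .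
  have eJe: "e s ** J ** transpose (e s) = J" if s: "s \<in> I" for s
  proof -
    have "e s ** J ** transpose (e s) = (e s ** (J ** transpose (e s) ** J)) ** J"
      by (simp add: matrix_mul_assoc J_def JJ flip: matrix_mul_assoc)
    also have "\<dots> = J" using rinv[OF s] by simp
    finally show ?thesis .
  qed
  have dW: "(W has_vector_derivative 0) (at s)" if s: "s \<in> I" for s
  proof -
    have de: "(e has_vector_derivative (e s ** Phi s)) (at s)" using frenet s unfolding Phi_def by auto
    note dT = P1[OF s]
    have dP: "((\<lambda>x. e x ** Theta x) has_vector_derivative
        (e s ** (Theta s ** Phi s - Phi s ** Theta s) + (e s ** Phi s) ** Theta s)) (at s)"
      by (rule bounded_bilinear.has_vector_derivative[OF bb de dT])
    have deT: "((\<lambda>x. transpose (e x)) has_vector_derivative transpose (e s ** Phi s)) (at s)"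
      by (rule bounded_linear.has_vector_derivative[OF blT de])
    have dJe: "((\<lambda>x. J ** transpose (e x)) has_vector_derivative
        (J ** transpose (e s ** Phi s) + 0 ** transpose (e s))) (at s)"
      by (rule bounded_bilinear.has_vector_derivative[OF bb has_vector_derivative_const deT])
    have dQ: "((\<lambda>x. J ** transpose (e x) ** J) has_vector_derivative
        ((J ** transpose (e s)) ** 0 + (J ** transpose (e s ** Phi s) + 0 ** transpose (e s)) ** J)) (at s)"
      by (rule bounded_bilinear.has_vector_derivative[OF bb dJe has_vector_derivative_const])
    have dW0: "(W has_vector_derivative
        ((e s ** Theta s) ** ((J ** transpose (e s)) ** 0 + (J ** transpose (e s ** Phi s) + 0 ** transpose (e s)) ** J)
         + (e s ** (Theta s ** Phi s - Phi s ** Theta s) + (e s ** Phi s) ** Theta s) ** (J ** transpose (e s) ** J))) (at s)"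
      unfolding W_def by (rule bounded_bilinear.has_vector_derivative[OF bb dP dQ])
    define E where "E = e s"
    define T where "T = Theta s"
    define F where "F = Phi s"
    have kF: "J ** transpose F + F ** J = 0"
      unfolding J_def F_def Phi_def by (rule kPhi)
    have P': "E ** (T ** F - F ** T) + (E ** F) ** T = E ** T ** F"
      by (simp add: mat_diff_ldistrib matrix_mul_assoc)
    have "(E ** T) ** ((J ** transpose E) ** 0 + (J ** transpose (E ** F) + 0 ** transpose E) ** J)
         + (E ** (T ** F - F ** T) + (E ** F) ** T) ** (J ** transpose E ** J)
        = (E ** T) ** ((J ** transpose F + F ** J) ** (transpose E ** J))"
      unfolding P'
      by (simp add: matrix_transpose_mul mat_add_rdistrib matrix_add_ldistrib matrix_mul_assoc)
    also have "\<dots> = 0" unfolding kF by simp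
    finally have "(E ** T) ** ((J ** transpose E) ** 0 + (J ** transpose (E ** F) + 0 ** transpose E) ** J)
         + (E ** (T ** F - F ** T) + (E ** F) ** T) ** (J ** transpose E ** J) = 0" .
    with dW0 show ?thesis unfolding E_def T_def F_def by simp
  qed
  have cvx: "convex I" using I_interval by (simp add: is_interval_convex)
  obtain c where c: "\<And>x. x \<in> I \<Longrightarrow> W x = c"
    using has_vector_derivative_zero_constant[OF cvx, of W]
      dW has_vector_derivative_at_within by blast
  have Wx: "e s ** Theta s ** matrix_inv (e s) = c" if s: "s \<in> I" for s
    using c[OF s] inv[OF s] unfolding W_def by simp
  have lie: "c \<in> mob4_lie_algebra"
  proof -
    define E where "E = e s0"
    define T where "T = Theta s0"
    have kT: "J ** transpose T + T ** J = 0"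
      unfolding J_def T_def Theta_def by (rule kTheta)
    have cE: "c = E ** T ** (J ** transpose E ** J)" using c[OF s0] unfolding W_def E_def T_def by simp
    have JT': "transpose J = J" unfolding J_def by (rule JT)
    have "transpose c ** J + J ** c = (J ** E) ** ((J ** transpose T + T ** J) ** (transpose E ** J))"
      unfolding cE
      by (simp add: matrix_transpose_mul JT' mat_add_rdistrib matrix_add_ldistrib matrix_mul_assoc)
    also have "\<dots> = 0" unfolding kT by simp
    finally show ?thesis unfolding mob4_lie_algebra_def J_def by simp
  qed
  have cp: "det (t *\<^sub>R mat 1 - c) = chi t" for t
  proof -
    define E where "E = e s0"
    define T where "T = Theta s0"
    define Ei where "Ei = matrix_inv E"
    have r: "E ** Ei = mat 1" unfolding Ei_def E_def using inv[OF s0] rinv[OF s0] by simp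
    have cE: "c = E ** T ** Ei" using Wx[OF s0] unfolding E_def T_def Ei_def by simp
    have "t *\<^sub>R mat 1 - c = E ** (t *\<^sub>R mat 1 - T) ** Ei"
    proof -
      have a: "E ** (t *\<^sub>R mat 1 - T) ** Ei = (E ** (t *\<^sub>R mat 1)) ** Ei - E ** T ** Ei"
        by (simp add: mat_diff_ldistrib mat_diff_rdistrib)
      have b: "(E ** (t *\<^sub>R mat 1)) ** Ei = t *\<^sub>R (E ** Ei)"
        by (simp only: matrix_scalar_ac matrix_mul_rid scalar_matrix_assoc)
      show ?thesis unfolding a b r cE ..
    qed
    hence "det (t *\<^sub>R mat 1 - c) = det E * det (t *\<^sub>R mat 1 - T) * det Ei"
      by (simp only: det_mul)
    also have "\<dots> = (det E * det Ei) * det (t *\<^sub>R mat 1 - T)"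
      by (simp only: ac_simps)
    also have "det E * det Ei = 1" using r det_mul[of E Ei] by simp
    finally have "det (t *\<^sub>R mat 1 - c) = det (t *\<^sub>R mat 1 - T)" by simp
    thus ?thesis using P3[OF s0] unfolding T_def by simp
  qed
  have ex: "\<exists>\<omega>\<in>mob4_lie_algebra. (\<forall>s\<in>I. e s ** Theta s ** matrix_inv (e s) = \<omega>)
              \<and> (\<forall>t. det (t *\<^sub>R mat 1 - \<omega>) = chi t)"
  proof (rule bexI[OF _ lie])
    show "(\<forall>s\<in>I. e s ** Theta s ** matrix_inv (e s) = c) \<and> (\<forall>t. det (t *\<^sub>R mat 1 - c) = chi t)"
      using Wx cp by (intro conjI ballI allI)
  qed
  have p1: "\<forall>s\<in>I. (Theta has_vector_derivative (Theta s ** Phi s - Phi s ** Theta s)) (at s)"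
    using P1 by (intro ballI)
  have p3: "\<forall>s\<in>I. \<forall>t. det (t *\<^sub>R mat 1 - Theta s) = chi t"
    using P3 by (intro ballI allI)
  show ?thesis using p1 ex p3 by (intro conjI)
qed

end
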